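(* For every formula $A$: $A$ is a theorem of the provability logic $\mathsf{GL}$ if and only if the one-element sequent $A$ is cut-free provable in the nested sequent calculus (rules (id), ($\land$), ($\lor$), ($\Box$), ($\Diamond$)).
   Context: $\mathsf{GL}$ is the normal modal logic obtained from $\mathsf{K}$ by adding the Löb axiom $\Box(\Box A\to A)\to\Box A$; a formula of the language below is read in $\mathsf{GL}$ by interpreting $\alpha^\perp$ as $\neg\alpha$ and $\Diamond$ as $\neg\Box\neg$. Fix a countable set of atoms; each atom $\alpha$ has a dual negative atom $\alpha^\perp$. Formulas: $A,B ::= \alpha \mid \alpha^\perp \mid A\land B \mid A\lor B \mid \Box A \mid \Diamond A$. Negation $A^\perp$ is defined by $(\alpha)^\perp=\alpha^\perp$, $(\alpha^\perp)^\perp=\alpha$, $(A\land B)^\perp=A^\perp\lor B^\perp$, $(A\lor B)^\perp=A^\perp\land B^\perp$, $(\Box A)^\perp=\Diamond A^\perp$, $(\Diamond A)^\perp=\Box A^\perp$. A (nested) sequent is given by $\Gamma,\Delta ::= \cdot \mid \Gamma, A \mid \Gamma, [\Delta]$, where $\cdot$ is the empty sequent; sequents are taken up to exchange (finite multisets of formulas and bracketed sequents), and $\Gamma,\Delta$ denotes juxtaposition. A unary context is given by $\Gamma\{-\} ::= \Delta,\{-\} \mid \Delta,[\Gamma\{-\}]$ (a sequent with exactly one hole); $\Gamma\{\Delta\}$ is the result of filling the hole with $\Delta$, and $\Gamma\{\}$ means $\Gamma\{\cdot\}$. Depth: $\mathrm{depth}(\Delta,\{-\})=0$, $\mathrm{depth}(\Delta,[\Gamma\{-\}])=\mathrm{depth}(\Gamma\{-\})+1$.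 Rules: (id) $\Gamma\{\alpha^\perp,\alpha\}$ with no premises ($\alpha$ an atom); ($\land$) from $\Gamma\{A\}$ and $\Gamma\{B\}$ infer $\Gamma\{A\land B\}$; ($\lor$) from $\Gamma\{A,B\}$ infer $\Gamma\{A\lor B\}$; ($\Box$) from $\Gamma\{[\Diamond A^\perp, A]\}$ infer $\Gamma\{\Box A\}$; ($\Diamond$) from $\Gamma\{\Delta\{A\},\Diamond A\}$ infer $\Gamma\{\Delta\{\},\Diamond A\}$, provided $\mathrm{depth}(\Delta\{-\})>0$; (cut) from $\Gamma\{A\}$ and $\Gamma\{A^\perp\}$ infer $\Gamma\{\}$. "Cut-free provable" means derivable using (id), ($\land$), ($\lor$), ($\Box$), ($\Diamond$) only. *)

theory Defs
  imports Main "HOL-Library.Multiset"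
begin

datatype fm =
    At nat
  | NAt nat
  | And fm fm
  | Or fm fm
  | Box fm
  | Dia fm

fun neg :: "fm \<Rightarrow> fm" where
  "neg (At a) = NAt a"
| "neg (NAt a) = At a"
| "neg (And A B) = Or (neg A) (neg B)"
| "neg (Or A B) = And (neg A) (neg B)"
| "neg (Box A) = Dia (neg A)"
| "neg (Dia A) = Box (neg A)"

datatype mfm = Var nat | Bot | Imp mfm mfm | MBox mfm

definition MNeg :: "mfm \<Rightarrow> mfm" where "MNeg A = Imp A Bot"
definition MOr :: "mfm \<Rightarrow> mfm \<Rightarrow> mfm" where "MOr A B = Imp (MNeg A) B"
definition MAnd :: "mfm \<Rightarrow> mfm \<Rightarrow> mfm" where "MAnd A B = MNeg (Imp A (MNeg B))"
definition MDia :: "mfm \<Rightarrow> mfm" where "MDia A = MNeg (MBox (MNeg A))"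

inductive GL :: "mfm \<Rightarrow> bool" where
  ax1: "GL (Imp A (Imp B A))"
| ax2: "GL (Imp (Imp A (Imp B C)) (Imp (Imp A B) (Imp A C)))"
| ax3: "GL (Imp (MNeg (MNeg A)) A)"
| axK: "GL (Imp (MBox (Imp A B)) (Imp (MBox A) (MBox B)))"
| axL: "GL (Imp (MBox (Imp (MBox A) A)) (MBox A))"
| mp: "GL (Imp A B) \<Longrightarrow> GL A \<Longrightarrow> GL B"
| nec: "GL A \<Longrightarrow> GL (MBox A)"

fun tr :: "fm \<Rightarrow> mfm" where
  "tr (At a) = Var a"
| "tr (NAt a) = MNeg (Var a)"
| "tr (And A B) = MAnd (tr A) (tr B)"
| "tr (Or A B) = MOr (tr A) (tr B)"
| "tr (Box A) = MBox (tr A)"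
| "tr (Dia A) = MDia (tr A)"

text \<open>A sequent: a finite multiset of formulas and a finite multiset of bracketed sequents.\<close>
datatype seq = Seq "fm multiset" "seq multiset"

fun sjoin :: "seq \<Rightarrow> seq \<Rightarrow> seq" where
  "sjoin (Seq F1 S1) (Seq F2 S2) = Seq (F1 + F2) (S1 + S2)"

definition sempty :: seq where "sempty = Seq {#} {#}"
definition sfm :: "fm \<Rightarrow> seq" where "sfm A = Seq {#A#} {#}"
definition sbr :: "seq \<Rightarrow> seq" where "sbr D = Seq {#} {#D#}"

text \<open>Unary contexts: Hole D is \<open>D,{-}\<close>; Nest D C is \<open>D,[C{-}]\<close>.\<close>
datatype ctx = Hole seq | Nest seq ctx

fun fill :: "ctx \<Rightarrow> seq \<Rightarrow> seq" where
  "fill (Hole D) X = sjoin D X"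
| "fill (Nest D C) X = sjoin D (sbr (fill C X))"

fun depth :: "ctx \<Rightarrow> nat" where
  "depth (Hole D) = 0"
| "depth (Nest D C) = Suc (depth C)"

inductive cfprov :: "seq \<Rightarrow> bool" where
  rid: "cfprov (fill G (Seq {#NAt a, At a#} {#}))"
| rand: "cfprov (fill G (sfm A)) \<Longrightarrow> cfprov (fill G (sfm B)) \<Longrightarrow> cfprov (fill G (sfm (And A B)))"
| ror: "cfprov (fill G (Seq {#A, B#} {#})) \<Longrightarrow> cfprov (fill G (sfm (Or A B)))"
| rbox: "cfprov (fill G (sbr (Seq {#Dia (neg A), A#} {#}))) \<Longrightarrow> cfprov (fill G (sfm (Box A)))"
| rdia: "depth D > 0 \<Longrightarrow> cfprov (fill G (sjoin (fill D (sfm A)) (sfm (Dia A))))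
         \<Longrightarrow> cfprov (fill G (sjoin (fill D sempty) (sfm (Dia A))))"

end

theory Submission
  imports Defs
begin


section \<open>Hilbert part\<close>

lemma GL_id: "GL (Imp A A)"
proof -
  have 1: "GL (Imp (Imp A (Imp (Imp A A) A)) (Imp (Imp A (Imp A A)) (Imp A A)))" by (rule ax2)
  have 2: "GL (Imp A (Imp (Imp A A) A))" by (rule ax1)
  have 3: "GL (Imp (Imp A (Imp A A)) (Imp A A))" using mp[OF 1 2] .
  show ?thesis using mp[OF 3 ax1] .
qed

inductive ded :: "mfm set \<Rightarrow> mfm \<Rightarrow> bool" for H where
  dhyp: "A \<in> H \<Longrightarrow> ded H A"
| dthm: "GL A \<Longrightarrow> ded H A"
| dmp: "ded H (Imp A B) \<Longrightarrow> ded H A \<Longrightarrow> ded H B"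

lemma ded_empty: "ded {} A \<Longrightarrow> GL A"
proof (induction rule: ded.induct)
  case (dmp A B) then show ?case using GL.mp by blast
qed auto

lemma ded_mono: "ded H A \<Longrightarrow> H \<subseteq> H' \<Longrightarrow> ded H' A"
proof (induction rule: ded.induct)
  case (dhyp A) then show ?case by (simp add: ded.dhyp subset_iff)
next
  case (dthm A) then show ?case by (simp add: ded.dthm)
next
  case (dmp A B) then show ?case using ded.dmp by blast
qed

lemma ded_deduct: "ded (insert A H) B \<Longrightarrow> ded H (Imp A B)"
proof (induction rule: ded.induct)
  case (dhyp C)
  then show ?case
  proof
    assume "C = A" then show ?thesis using GL_id dthm by blast
  next
    assume "C \<in> H" then show ?thesis using ded.dmp[OF ded.dthm[OF ax1] ded.dhyp] by blast
  qed
next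
  case (dthm C)
  then show ?case using ded.dmp[OF ded.dthm[OF ax1[of C A]] ded.dthm] by blast
next
  case (dmp C D)
  then show ?case using ded.dmp[OF ded.dmp[OF ded.dthm[OF ax2[of A C D]]]] by blast
qed

lemma ded_hyp_ins: "ded (insert A H) A" by (simp add: dhyp)

lemma ded_efq: "ded H (Imp Bot B)"
proof -
  have "ded (insert Bot H) B"
  proof -
    have "ded (insert (MNeg B) (insert Bot H)) Bot" by (rule dhyp) simp
    then have "ded (insert Bot H) (Imp (MNeg B) Bot)" by (rule ded_deduct)
    then show ?thesis using ded.dmp[OF ded.dthm[OF ax3[of B]]] unfolding MNeg_def by blast
  qed
  then show ?thesis by (rule ded_deduct)
qed

lemma ded_neg_imp: "ded H (MNeg A) \<Longrightarrow> ded H (Imp A B)"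
proof -
  assume a: "ded H (MNeg A)"
  have 1: "ded (insert A H) (Imp A Bot)" using ded_mono[OF a, of "insert A H"] unfolding MNeg_def by blast
  have 2: "ded (insert A H) A" by (rule dhyp) simp
  have "ded (insert A H) B" using ded.dmp[OF ded_efq ded.dmp[OF 1 2]] .
  then show ?thesis by (rule ded_deduct)
qed

lemma ded_imp_neg: "ded H A \<Longrightarrow> ded H (MNeg B) \<Longrightarrow> ded H (MNeg (Imp A B))"
proof -
  assume a: "ded H A" and b: "ded H (MNeg B)"
  have "ded (insert (Imp A B) H) Bot"
  proof -
    have 1: "ded (insert (Imp A B) H) A" by (rule ded_mono[OF a]) blast
    have 2: "ded (insert (Imp A B) H) (Imp B Bot)" using ded_mono[OF b, of "insert (Imp A B) H"] unfolding MNeg_def by blast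
    have 3: "ded (insert (Imp A B) H) (Imp A B)" by (rule dhyp) simp
    show ?thesis using ded.dmp[OF 2 ded.dmp[OF 3 1]] .
  qed
  then show ?thesis unfolding MNeg_def by (rule ded_deduct)
qed

lemma ded_cases:
  assumes 1: "ded (insert p H) F" and 2: "ded (insert (MNeg p) H) F"
  shows "ded H F"
proof -
  have a: "ded H (Imp p F)" using ded_deduct[OF 1] .
  have b: "ded H (Imp (MNeg p) F)" using ded_deduct[OF 2] .
  have c: "ded (insert (MNeg F) H) (MNeg p)"
  proof -
    have a': "ded (insert p (insert (MNeg F) H)) (Imp p F)" by (rule ded_mono[OF a]) blast
    have h1: "ded (insert p (insert (MNeg F) H)) p" by (rule dhyp) simp
    have h2: "ded (insert p (insert (MNeg F) H)) (Imp F Bot)" by (rule dhyp) (simp add: MNeg_def)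
    have "ded (insert p (insert (MNeg F) H)) Bot" using ded.dmp[OF h2 ded.dmp[OF a' h1]] .
    then show ?thesis unfolding MNeg_def by (rule ded_deduct)
  qed
  have b': "ded (insert (MNeg F) H) (Imp (MNeg p) F)" by (rule ded_mono[OF b]) blast
  have h2: "ded (insert (MNeg F) H) (Imp F Bot)" by (rule dhyp) (simp add: MNeg_def)
  have d: "ded (insert (MNeg F) H) Bot" using ded.dmp[OF h2 ded.dmp[OF b' c]] .
  have "ded H (MNeg (MNeg F))" using ded_deduct[OF d] unfolding MNeg_def .
  then show ?thesis using ded.dmp[OF ded.dthm[OF ax3]] by blast
qed

section \<open>Propositional completeness (Kalmar)\<close>

fun peval :: "(mfm \<Rightarrow> bool) \<Rightarrow> mfm \<Rightarrow> bool" where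
  "peval v (Var a) = v (Var a)"
| "peval v Bot = False"
| "peval v (Imp A B) = (peval v A \<longrightarrow> peval v B)"
| "peval v (MBox A) = v (MBox A)"

fun primes :: "mfm \<Rightarrow> mfm set" where
  "primes (Var a) = {Var a}"
| "primes Bot = {}"
| "primes (Imp A B) = primes A \<union> primes B"
| "primes (MBox A) = {MBox A}"

lemma finite_primes: "finite (primes F)" by (induction F) auto

definition lit :: "(mfm \<Rightarrow> bool) \<Rightarrow> mfm \<Rightarrow> mfm" where
  "lit v p = (if v p then p else MNeg p)"

definition taut :: "mfm \<Rightarrow> bool" where "taut F = (\<forall>v. peval v F)"

lemma kalmar: "lit v ` primes F \<subseteq> H \<Longrightarrow> ded H (if peval v F then F else MNeg F)"
proof (induction F arbitrary: H)
  case (Var x)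
  have h: "lit v (Var x) \<in> H" using Var.prems by simp
  show ?case using h unfolding lit_def by (cases "v (Var x)") (simp_all add: dhyp)
next
  case Bot
  then show ?case using GL_id dthm unfolding MNeg_def by auto
next
  case (Imp A B)
  have pa: "lit v ` primes A \<subseteq> H" and pb: "lit v ` primes B \<subseteq> H" using Imp.prems by auto
  note a = Imp.IH(1)[OF pa] and b = Imp.IH(2)[OF pb]
  show ?case
  proof (cases "peval v B")
    case True
    then show ?thesis using b ded.dmp[OF ded.dthm[OF ax1], of H B A] by simp
  next
    case False
    show ?thesis
    proof (cases "peval v A")
      case True
      then show ?thesis using a b False ded_imp_neg[of H A B] by simp
    next
      case f2: False
      then show ?thesis using a False ded_neg_imp[of H A B] by simp
    qed
  qed
next
  case (MBox F)
  have h: "lit v (MBox F) \<in> H" using MBox.prems by simp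
  show ?case using h unfolding lit_def by (cases "v (MBox F)") (simp_all add: dhyp)
qed

lemma elim_primes:
  assumes "finite Q"
  shows "(\<forall>v. ded (lit v ` (Q \<union> T)) F) \<Longrightarrow> (\<forall>v. ded (lit v ` T) F)"
  using assms
proof (induction Q rule: finite_induct)
  case empty
  then show ?case by simp
next
  case (insert q Q)
  have "\<forall>v. ded (lit v ` (Q \<union> T)) F"
  proof
    fix v
    show "ded (lit v ` (Q \<union> T)) F"
    proof (cases "q \<in> Q \<union> T")
      case True
      then have "insert q Q \<union> T = Q \<union> T" by auto
      then show ?thesis using insert.prems by metis
    next
      case False
      let ?v1 = "v(q := True)" and ?v0 = "v(q := False)"
      have e1: "lit ?v1 ` (Q \<union> T) = lit v ` (Q \<union> T)"
        using False by (auto simp: lit_def image_def)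
      have e0: "lit ?v0 ` (Q \<union> T) = lit v ` (Q \<union> T)"
        using False by (auto simp: lit_def image_def)
      have 1: "ded (insert q (lit v ` (Q \<union> T))) F"
        using insert.prems[rule_format, of ?v1] e1 by (simp add: lit_def)
      have 0: "ded (insert (MNeg q) (lit v ` (Q \<union> T))) F"
        using insert.prems[rule_format, of ?v0] e0 by (simp add: lit_def)
      show ?thesis using ded_cases[OF 1 0] .
    qed
  qed
  then show ?case using insert.IH by blast
qed

lemma taut_GL: "taut F \<Longrightarrow> GL F"
proof -
  assume t: "taut F"
  have "ded (lit v ` (primes F \<union> {})) F" for v
    using kalmar[of v F "lit v ` primes F"] t unfolding taut_def by simp
  then have "\<forall>v. ded (lit v ` {}) F" using elim_primes[OF finite_primes] by blast
  then show ?thesis using ded_empty by simp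
qed

lemma GL_taut1: "GL A \<Longrightarrow> taut (Imp A B) \<Longrightarrow> GL B"
  using taut_GL mp by blast

lemma GL_taut2: "GL A \<Longrightarrow> GL B \<Longrightarrow> taut (Imp A (Imp B C)) \<Longrightarrow> GL C"
  using taut_GL mp by blast


lemma GL_tautN_aux: "finite Fs \<Longrightarrow> (\<forall>F\<in>Fs. GL F) \<Longrightarrow> (\<forall>v. (\<forall>F\<in>Fs. peval v F) \<longrightarrow> peval v G) \<Longrightarrow> GL G"
proof (induction Fs arbitrary: G rule: finite_induct)
  case empty
  then show ?case using taut_GL unfolding taut_def by auto
next
  case (insert F Fs)
  have "GL (Imp F G)" using insert.IH[of "Imp F G"] insert.prems by auto
  then show ?case using insert.prems mp by blast
qed

lemma GL_tautN: "(\<forall>F\<in>set Fs. GL F) \<Longrightarrow> (\<And>v. (\<forall>F\<in>set Fs. peval v F) \<Longrightarrow> peval v G) \<Longrightarrow> GL G"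
  using GL_tautN_aux[of "set Fs" G] by auto

lemma peval_simps[simp]:
  "peval v (MNeg A) = (\<not> peval v A)"
  "peval v (MOr A B) = (peval v A \<or> peval v B)"
  "peval v (MAnd A B) = (peval v A \<and> peval v B)"
  "peval v (MDia A) = (\<not> v (MBox (MNeg A)))"
  by (auto simp: MNeg_def MOr_def MAnd_def MDia_def)

lemma K_mono: "GL (Imp A B) \<Longrightarrow> GL (Imp (MBox A) (MBox B))"
  using axK mp nec by blast

lemma K_conj: "GL (Imp (MBox A) (Imp (MBox B) (MBox (MAnd A B))))"
proof -
  have "GL (Imp A (Imp B (MAnd A B)))" by (rule GL_tautN[of "[]"]) auto
  then have 1: "GL (Imp (MBox A) (MBox (Imp B (MAnd A B))))" by (rule K_mono)
  have 2: "GL (Imp (MBox (Imp B (MAnd A B))) (Imp (MBox B) (MBox (MAnd A B))))" by (rule axK)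
  show ?thesis by (rule GL_tautN[of "[Imp (MBox A) (MBox (Imp B (MAnd A B))), Imp (MBox (Imp B (MAnd A B))) (Imp (MBox B) (MBox (MAnd A B)))]"]) (use 1 2 in auto)
qed

lemma GL_4: "GL (Imp (MBox A) (MBox (MBox A)))"
proof -
  define C where "C = MAnd A (MBox A)"
  have i: "GL (Imp (MBox C) (MBox (MBox A)))"
    by (rule K_mono, rule GL_tautN[of "[]"]) (auto simp: C_def)
  have ii: "GL (Imp (MBox C) (MBox A))"
    by (rule K_mono, rule GL_tautN[of "[]"]) (auto simp: C_def)
  have iii: "GL (Imp A (Imp (MBox C) C))"
    by (rule GL_tautN[of "[Imp (MBox C) (MBox A)]"]) (use ii in \<open>auto simp: C_def\<close>)
  have iv: "GL (Imp (MBox A) (MBox (Imp (MBox C) C)))" using K_mono[OF iii] .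
  have v: "GL (Imp (MBox (Imp (MBox C) C)) (MBox C))" by (rule axL)
  show ?thesis
    by (rule GL_tautN[of "[Imp (MBox A) (MBox (Imp (MBox C) C)), Imp (MBox (Imp (MBox C) C)) (MBox C), Imp (MBox C) (MBox (MBox A))]"])
      (use i iv v in auto)
qed

lemma dia4: "GL (Imp (MDia (MDia x)) (MDia x))"
proof -
  have a: "GL (Imp (MBox (MNeg x)) (MBox (MBox (MNeg x))))" by (rule GL_4)
  have b: "GL (Imp (MBox (MBox (MNeg x))) (MBox (MNeg (MNeg (MBox (MNeg x))))))"
    by (rule K_mono, rule GL_tautN[of "[]"]) auto
  show ?thesis unfolding MDia_def[of "MDia x"] unfolding MDia_def[of x]
    by (rule GL_tautN[of "[Imp (MBox (MNeg x)) (MBox (MBox (MNeg x))), Imp (MBox (MBox (MNeg x))) (MBox (MNeg (MNeg (MBox (MNeg x)))))]"])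
      (use a b in auto)
qed

lemma dia_or: "GL (Imp (MDia (MOr a b)) (MOr (MDia a) (MDia b)))"
proof -
  have 1: "GL (Imp (MBox (MNeg a)) (Imp (MBox (MNeg b)) (MBox (MAnd (MNeg a) (MNeg b)))))" by (rule K_conj)
  have 2: "GL (Imp (MBox (MAnd (MNeg a) (MNeg b))) (MBox (MNeg (MOr a b))))"
    by (rule K_mono, rule GL_tautN[of "[]"]) auto
  show ?thesis
    by (rule GL_tautN[of "[Imp (MBox (MNeg a)) (Imp (MBox (MNeg b)) (MBox (MAnd (MNeg a) (MNeg b)))), Imp (MBox (MAnd (MNeg a) (MNeg b))) (MBox (MNeg (MOr a b)))]"])
      (use 1 2 in auto)
qed

fun disj :: "mfm list \<Rightarrow> mfm" where
  "disj [] = Bot"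
| "disj (x # xs) = MOr x (disj xs)"

lemma peval_disj[simp]: "peval v (disj xs) = (\<exists>x\<in>set xs. peval v x)"
  by (induction xs) auto

lemma dia_disj: "GL (Imp (MDia (disj xs)) (disj (map MDia xs)))"
proof (induction xs)
  case Nil
  have "GL (MBox (MNeg Bot))" using nec GL_id unfolding MNeg_def by blast
  then show ?case by (intro GL_tautN[of "[MBox (MNeg Bot)]"]) auto
next
  case (Cons x xs)
  have d: "GL (Imp (MDia (MOr x (disj xs))) (MOr (MDia x) (MDia (disj xs))))" by (rule dia_or)
  show ?case
    by (rule GL_tautN[of "[Imp (MDia (MOr x (disj xs))) (MOr (MDia x) (MDia (disj xs))), Imp (MDia (disj xs)) (disj (map MDia xs))]"])
      (use d Cons in auto)
qed

definition sdisj :: "mfm set \<Rightarrow> mfm" where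
  "sdisj S = disj (SOME xs. set xs = S)"

lemma peval_sdisj: "finite S \<Longrightarrow> peval v (sdisj S) = (\<exists>x\<in>S. peval v x)"
proof -
  assume "finite S"
  then have "\<exists>xs. set xs = S" using finite_list by blast
  then have "set (SOME xs. set xs = S) = S" by (rule someI_ex)
  then show ?thesis by (simp add: sdisj_def)
qed

lemma dia_sdisj:
  assumes "finite S" "\<And>x. x \<in> S \<Longrightarrow> GL (Imp (MDia x) T)"
  shows "GL (Imp (MDia (sdisj S)) T)"
proof -
  define ys where "ys = (SOME xs. set xs = S)"
  have "\<exists>xs. set xs = S" using assms(1) finite_list by blast
  then have ys: "set ys = S" unfolding ys_def by (rule someI_ex)
  have 1: "GL (Imp (MDia (disj ys)) (disj (map MDia ys)))" by (rule dia_disj)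
  have 2: "\<forall>x\<in>set ys. GL (Imp (MDia x) T)" using assms(2) ys by auto
  have "GL (Imp (MDia (disj ys)) T)"
    by (rule GL_tautN[of "Imp (MDia (disj ys)) (disj (map MDia ys)) # map (\<lambda>x. Imp (MDia x) T) ys"])
       (use 1 2 in auto)
  then show ?thesis by (simp add: sdisj_def ys_def)
qed

lemma tr_excl: "GL (Imp (tr A) (MNeg (tr (neg A))))"
proof (induction A)
  case (At x)
  then show ?case by (intro GL_tautN[of "[]"]) auto
next
  case (NAt x)
  then show ?case by (intro GL_tautN[of "[]"]) auto
next
  case (And A1 A2)
  then show ?case by (intro GL_tautN[of "[Imp (tr A1) (MNeg (tr (neg A1))), Imp (tr A2) (MNeg (tr (neg A2)))]"]) auto
next
  case (Or A1 A2)
  then show ?case by (intro GL_tautN[of "[Imp (tr A1) (MNeg (tr (neg A1))), Imp (tr A2) (MNeg (tr (neg A2)))]"]) auto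
next
  case (Box A)
  have "GL (Imp (MBox (tr A)) (MBox (MNeg (tr (neg A)))))" using K_mono[OF Box] .
  then show ?case by (intro GL_tautN[of "[Imp (MBox (tr A)) (MBox (MNeg (tr (neg A))))]"]) auto
next
  case (Dia A)
  have "GL (Imp (tr (neg A)) (MNeg (tr A)))" by (rule GL_tautN[of "[Imp (tr A) (MNeg (tr (neg A)))]"]) (use Dia in auto)
  then have "GL (Imp (MBox (tr (neg A))) (MBox (MNeg (tr A))))" by (rule K_mono)
  then show ?case by (intro GL_tautN[of "[Imp (MBox (tr (neg A))) (MBox (MNeg (tr A)))]"]) auto
qed

section \<open>Shallow calculus\<close>

inductive SP :: "fm set \<Rightarrow> fm set \<Rightarrow> bool" where
  sid: "NAt a \<in> X \<Longrightarrow> At a \<in> X \<Longrightarrow> SP P X"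
| sand: "And A B \<in> X \<Longrightarrow> SP P (insert A (X - {And A B})) \<Longrightarrow> SP P (insert B (X - {And A B})) \<Longrightarrow> SP P X"
| sor: "Or A B \<in> X \<Longrightarrow> SP P (insert A (insert B (X - {Or A B}))) \<Longrightarrow> SP P X"
| sbox: "Box A \<in> X \<Longrightarrow> SP (P \<union> {B. Dia B \<in> X}) {Dia (neg A), A} \<Longrightarrow> SP P X"
| sinh: "B \<in> P \<Longrightarrow> SP P (insert B X) \<Longrightarrow> SP P X"

definition phi :: "fm \<Rightarrow> mfm" where "phi B = MOr (tr B) (MDia (tr B))"

definition iota :: "fm set \<Rightarrow> fm set \<Rightarrow> mfm" where
  "iota P X = sdisj (phi ` P \<union> tr ` X)"

lemma finite_dias: "finite X \<Longrightarrow> finite {B. Dia B \<in> X}"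
  using finite_vimageI[of X Dia] by (simp add: vimage_def inj_def)

lemma peval_iota: "finite P \<Longrightarrow> finite X \<Longrightarrow> peval v (iota P X) = ((\<exists>B\<in>P. peval v (phi B)) \<or> (\<exists>B\<in>X. peval v (tr B)))"
  by (auto simp: iota_def peval_sdisj)

lemma SP_sound: "SP P X \<Longrightarrow> finite P \<Longrightarrow> finite X \<Longrightarrow> GL (iota P X)"
proof (induction rule: SP.induct)
  case (sid a X P)
  show ?case
  proof (rule GL_tautN[of "[]"])
    fix v
    have "\<exists>B\<in>X. peval v (tr B)"
    proof (cases "v (Var a)")
      case True then show ?thesis using sid.hyps(2) by (intro bexI[of _ "At a"]) auto
    next
      case False then show ?thesis using sid.hyps(1) by (intro bexI[of _ "NAt a"]) auto
    qed
    then show "peval v (iota P X)" using sid.prems by (simp add: peval_iota)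
  qed simp
next
  case (sand A B X P)
  have 1: "GL (iota P (insert A (X - {And A B})))" and 2: "GL (iota P (insert B (X - {And A B})))"
    using sand by auto
  show ?case
  proof (rule GL_tautN[of "[iota P (insert A (X - {And A B})), iota P (insert B (X - {And A B}))]"])
    show "\<forall>F\<in>set [iota P (insert A (X - {And A B})), iota P (insert B (X - {And A B}))]. GL F" using 1 2 by simp
  next
    fix v assume H: "\<forall>F\<in>set [iota P (insert A (X - {And A B})), iota P (insert B (X - {And A B}))]. peval v F"
    have h1: "(\<exists>B'\<in>P. peval v (phi B')) \<or> (\<exists>C\<in>insert A (X - {And A B}). peval v (tr C))"
      using H sand.prems by (simp add: peval_iota)
    have h2: "(\<exists>B'\<in>P. peval v (phi B')) \<or> (\<exists>C\<in>insert B (X - {And A B}). peval v (tr C))"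
      using H sand.prems by (simp add: peval_iota)
    have "(\<exists>B'\<in>P. peval v (phi B')) \<or> (\<exists>C\<in>X. peval v (tr C))"
    proof (cases "peval v (tr A) \<and> peval v (tr B)")
      case True
      then have "peval v (tr (And A B))" by simp
      then show ?thesis using sand.hyps(1) by blast
    next
      case False
      then show ?thesis using h1 h2 by blast
    qed
    then show "peval v (iota P X)" using sand.prems by (simp add: peval_iota)
  qed
next
  case (sor A B X P)
  have 1: "GL (iota P (insert A (insert B (X - {Or A B}))))" using sor by auto
  show ?case
  proof (rule GL_tautN[of "[iota P (insert A (insert B (X - {Or A B})))]"])
    show "\<forall>F\<in>set [iota P (insert A (insert B (X - {Or A B})))]. GL F" using 1 by simp
  next
    fix v assume H: "\<forall>F\<in>set [iota P (insert A (insert B (X - {Or A B})))]. peval v F"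
    have h1: "(\<exists>B'\<in>P. peval v (phi B')) \<or> (\<exists>C\<in>insert A (insert B (X - {Or A B})). peval v (tr C))"
      using H sor.prems by (simp add: peval_iota)
    have "(\<exists>B'\<in>P. peval v (phi B')) \<or> (\<exists>C\<in>X. peval v (tr C))"
    proof (cases "peval v (tr A) \<or> peval v (tr B)")
      case True
      then have "peval v (tr (Or A B))" by simp
      then show ?thesis using sor.hyps(1) by blast
    next
      case False
      then show ?thesis using h1 by blast
    qed
    then show "peval v (iota P X)" using sor.prems by (simp add: peval_iota)
  qed
next
  case (sinh B P X)
  have 1: "GL (iota P (insert B X))" using sinh by auto
  show ?case
  proof (rule GL_tautN[of "[iota P (insert B X)]"])
    show "\<forall>F\<in>set [iota P (insert B X)]. GL F" using 1 by simp
  next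
    fix v assume H: "\<forall>F\<in>set [iota P (insert B X)]. peval v F"
    have h1: "(\<exists>B'\<in>P. peval v (phi B')) \<or> (\<exists>C\<in>insert B X. peval v (tr C))"
      using H sinh.prems by (simp add: peval_iota)
    have "(\<exists>B'\<in>P. peval v (phi B')) \<or> (\<exists>C\<in>X. peval v (tr C))"
    proof (cases "peval v (tr B)")
      case True
      then have "peval v (phi B)" by (simp add: phi_def)
      then show ?thesis using sinh.hyps(1) by blast
    next
      case False
      then show ?thesis using h1 by blast
    qed
    then show "peval v (iota P X)" using sinh.prems by (simp add: peval_iota)
  qed
next
  case (sbox A X P)
  define Q where "Q = P \<union> {B. Dia B \<in> X}"
  have fQ: "finite Q" using sbox.prems finite_dias Q_def by auto
  have prem: "GL (iota Q {Dia (neg A), A})" using sbox Q_def fQ by auto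
  define p where "p = sdisj (phi ` Q)"
  define q where "q = MOr (MDia (tr (neg A))) (tr A)"
  have "GL (Imp (MNeg p) q)"
    by (rule GL_tautN[of "[iota Q {Dia (neg A), A}]"]) (use prem fQ in \<open>auto simp: peval_iota p_def q_def peval_sdisj\<close>)
  then have a: "GL (MBox (Imp (MNeg p) q))" by (rule nec)
  have b: "GL (Imp (MBox (Imp (MNeg p) q)) (Imp (MBox (MNeg p)) (MBox q)))" by (rule axK)
  have F: "GL (Imp (MBox (tr A)) (MBox (MNeg (tr (neg A)))))" using K_mono[OF tr_excl] .
  have "GL (Imp q (Imp (MBox (tr A)) (tr A)))"
    by (rule GL_tautN[of "[Imp (MBox (tr A)) (MBox (MNeg (tr (neg A))))]"]) (use F in \<open>auto simp: q_def\<close>)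
  then have c: "GL (Imp (MBox q) (MBox (Imp (MBox (tr A)) (tr A))))" by (rule K_mono)
  have d: "GL (Imp (MBox (Imp (MBox (tr A)) (tr A))) (MBox (tr A)))" by (rule axL)
  have e: "GL (Imp (MDia p) (sdisj ((\<lambda>B. MDia (tr B)) ` Q)))"
    unfolding p_def
  proof (rule dia_sdisj)
    show "finite (phi ` Q)" using fQ by auto
  next
    fix x assume "x \<in> phi ` Q"
    then obtain B where x: "x = phi B" and B: "B \<in> Q" by auto
    have 1: "GL (Imp (MDia (MOr (tr B) (MDia (tr B)))) (MOr (MDia (tr B)) (MDia (MDia (tr B)))))" by (rule dia_or)
    have 2: "GL (Imp (MDia (MDia (tr B))) (MDia (tr B)))" by (rule dia4)
    show "GL (Imp (MDia x) (sdisj ((\<lambda>B. MDia (tr B)) ` Q)))"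
      by (rule GL_tautN[of "[Imp (MDia (MOr (tr B) (MDia (tr B)))) (MOr (MDia (tr B)) (MDia (MDia (tr B)))), Imp (MDia (MDia (tr B))) (MDia (tr B))]"])
        (use 1 2 B fQ in \<open>auto simp: x phi_def peval_sdisj\<close>)
  qed
  let ?L = "[MBox (Imp (MNeg p) q), Imp (MBox (Imp (MNeg p) q)) (Imp (MBox (MNeg p)) (MBox q)),
       Imp (MBox q) (MBox (Imp (MBox (tr A)) (tr A))), Imp (MBox (Imp (MBox (tr A)) (tr A))) (MBox (tr A)),
       Imp (MDia p) (sdisj ((\<lambda>B. MDia (tr B)) ` Q))]"
  show ?case
  proof (rule GL_tautN[of ?L])
    show "\<forall>F\<in>set ?L. GL F" using a b c d e by simp
  next
    fix v assume H: "\<forall>F\<in>set ?L. peval v F"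
    have h1: "v (MBox (tr A)) \<or> \<not> v (MBox (MNeg p))" using H by (simp; blast)
    have h2: "\<not> v (MBox (MNeg p)) \<longrightarrow> (\<exists>B\<in>Q. \<not> v (MBox (MNeg (tr B))))"
      using H fQ by (simp add: peval_sdisj)
    have "(\<exists>B'\<in>P. peval v (phi B')) \<or> (\<exists>C\<in>X. peval v (tr C))"
    proof (cases "v (MBox (tr A))")
      case True
      then have "peval v (tr (Box A))" by simp
      then show ?thesis using sbox.hyps(1) by blast
    next
      case False
      then obtain B where B: "B \<in> Q" "\<not> v (MBox (MNeg (tr B)))" using h1 h2 by blast
      show ?thesis
      proof (cases "B \<in> P")
        case True
        then show ?thesis using B by (auto simp: phi_def)
      next
        case False
        then have "Dia B \<in> X" using B Q_def by auto
        moreover have "peval v (tr (Dia B))" using B by simp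
        ultimately show ?thesis by blast
      qed
    qed
    then show "peval v (iota P X)" using sbox.prems by (simp add: peval_iota)
  qed
qed


section \<open>Kripke semantics\<close>

fun meval :: "('w \<Rightarrow> 'w \<Rightarrow> bool) \<Rightarrow> (nat \<Rightarrow> 'w \<Rightarrow> bool) \<Rightarrow> 'w \<Rightarrow> mfm \<Rightarrow> bool" where
  "meval R V w (Var a) = V a w"
| "meval R V w Bot = False"
| "meval R V w (Imp A B) = (meval R V w A \<longrightarrow> meval R V w B)"
| "meval R V w (MBox A) = (\<forall>u. R w u \<longrightarrow> meval R V u A)"

fun feval :: "('w \<Rightarrow> 'w \<Rightarrow> bool) \<Rightarrow> (nat \<Rightarrow> 'w \<Rightarrow> bool) \<Rightarrow> 'w \<Rightarrow> fm \<Rightarrow> bool" where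
  "feval R V w (At a) = V a w"
| "feval R V w (NAt a) = (\<not> V a w)"
| "feval R V w (And A B) = (feval R V w A \<and> feval R V w B)"
| "feval R V w (Or A B) = (feval R V w A \<or> feval R V w B)"
| "feval R V w (Box A) = (\<forall>u. R w u \<longrightarrow> feval R V u A)"
| "feval R V w (Dia A) = (\<exists>u. R w u \<and> feval R V u A)"

lemma meval_tr: "meval R V w (tr A) = feval R V w A"
  by (induction A arbitrary: w) (auto simp: MNeg_def MOr_def MAnd_def MDia_def)

lemma feval_neg[simp]: "feval R V w (neg A) = (\<not> feval R V w A)"
  by (induction A arbitrary: w) auto

definition glframe :: "('w \<Rightarrow> 'w \<Rightarrow> bool) \<Rightarrow> bool" where
  "glframe R = ((\<forall>x y z. R x y \<longrightarrow> R y z \<longrightarrow> R x z) \<and> wf {(y, x). R x y})"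

lemma loeb_max:
  assumes "glframe R" "R w v" "\<not> Q v"
  shows "\<exists>z. R w z \<and> \<not> Q z \<and> (\<forall>y. R z y \<longrightarrow> Q y)"
proof -
  have wf: "wf {(y, x). R x y}" and tr: "\<And>x y z. R x y \<Longrightarrow> R y z \<Longrightarrow> R x z"
    using assms(1) unfolding glframe_def by blast+
  have "v \<in> {u. R w u \<and> \<not> Q u}" using assms by auto
  then obtain z where z: "z \<in> {u. R w u \<and> \<not> Q u}" and m: "\<And>y. (y, z) \<in> {(y, x). R x y} \<Longrightarrow> y \<notin> {u. R w u \<and> \<not> Q u}"
    using wf_eq_minimal[THEN iffD1, OF wf, rule_format, of _ "{u. R w u \<and> \<not> Q u}"] by blast
  have "\<forall>y. R z y \<longrightarrow> Q y"
  proof (intro allI impI)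
    fix y assume "R z y"
    then have "R w y" "(y, z) \<in> {(y, x). R x y}" using z tr by auto
    then show "Q y" using m by blast
  qed
  then show ?thesis using z by blast
qed

lemma GL_sound: "GL F \<Longrightarrow> glframe R \<Longrightarrow> meval R V w F"
proof (induction arbitrary: w rule: GL.induct)
  case (ax3 A)
  then show ?case by (simp add: MNeg_def)
next
  case (axL A)
  show ?case
  proof (rule ccontr)
    assume "\<not> meval R V w (Imp (MBox (Imp (MBox A) A)) (MBox A))"
    then have h: "\<forall>u. R w u \<longrightarrow> (\<forall>y. R u y \<longrightarrow> meval R V y A) \<longrightarrow> meval R V u A"
      and "\<exists>v. R w v \<and> \<not> meval R V v A" by auto
    then obtain v where "R w v" "\<not> meval R V v A" by blast
    then obtain z where "R w z" "\<not> meval R V z A" "\<forall>y. R z y \<longrightarrow> meval R V y A"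
      using loeb_max[OF axL.prems, of w v "\<lambda>u. meval R V u A"] by blast
    then show False using h by blast
  qed
next
  case (mp A B) then show ?case by simp
next
  case (nec A) then show ?case by simp
next
  case (ax1 A B) then show ?case by simp
next
  case (ax2 A B C) then show ?case by simp
next
  case (axK A B) then show ?case by simp
qed

section \<open>Semantics of nested sequents\<close>

lemma size_mem_mset: "x \<in># S \<Longrightarrow> f x < size_multiset f S"
proof -
  assume "x \<in># S"
  then obtain S' where "S = add_mset x S'" by (metis multi_member_split)
  then show ?thesis by simp
qed

inductive sval :: "('w \<Rightarrow> 'w \<Rightarrow> bool) \<Rightarrow> (nat \<Rightarrow> 'w \<Rightarrow> bool) \<Rightarrow> 'w \<Rightarrow> seq \<Rightarrow> bool" for R V where
  svF: "A \<in># F \<Longrightarrow> feval R V w A \<Longrightarrow> sval R V w (Seq F S)"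
| svS: "s \<in># S \<Longrightarrow> (\<forall>u. R w u \<longrightarrow> sval R V u s) \<Longrightarrow> sval R V w (Seq F S)"

lemma sval_Seq: "sval R V w (Seq F S) = ((\<exists>A\<in>#F. feval R V w A) \<or> (\<exists>s\<in>#S. \<forall>u. R w u \<longrightarrow> sval R V u s))"
proof
  assume "sval R V w (Seq F S)"
  then show "(\<exists>A\<in>#F. feval R V w A) \<or> (\<exists>s\<in>#S. \<forall>u. R w u \<longrightarrow> sval R V u s)"
    by (cases rule: sval.cases) auto
next
  assume "(\<exists>A\<in>#F. feval R V w A) \<or> (\<exists>s\<in>#S. \<forall>u. R w u \<longrightarrow> sval R V u s)"
  then show "sval R V w (Seq F S)"
  proof (elim disjE bexE)
    fix A assume "A \<in># F" "feval R V w A" then show ?thesis by (rule svF)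
  next
    fix s assume "s \<in># S" "\<forall>u. R w u \<longrightarrow> sval R V u s" then show ?thesis by (rule svS)
  qed
qed


lemma sval_sjoin[simp]: "sval R V w (sjoin X Y) = (sval R V w X \<or> sval R V w Y)"
  by (cases X; cases Y) (auto simp: sval_Seq)

lemma sval_sempty[simp]: "\<not> sval R V w sempty"
  by (simp add: sempty_def sval_Seq)

lemma sval_sfm[simp]: "sval R V w (sfm A) = feval R V w A"
  by (simp add: sfm_def sval_Seq)

lemma sval_sbr[simp]: "sval R V w (sbr D) = (\<forall>u. R w u \<longrightarrow> sval R V u D)"
  by (simp add: sbr_def sval_Seq)

lemma fill_valid: "(\<And>v. sval R V v X) \<Longrightarrow> sval R V w (fill G X)"
  by (induction G arbitrary: w) auto

lemma fill_mono: "(\<And>v. sval R V v X \<Longrightarrow> sval R V v Y) \<Longrightarrow> sval R V w (fill G X) \<Longrightarrow> sval R V w (fill G Y)"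
  by (induction G arbitrary: w) auto

lemma fill_conj: "(\<And>v. sval R V v X1 \<Longrightarrow> sval R V v X2 \<Longrightarrow> sval R V v Y) \<Longrightarrow>
   sval R V w (fill G X1) \<Longrightarrow> sval R V w (fill G X2) \<Longrightarrow> sval R V w (fill G Y)"
  by (induction G arbitrary: w) auto

lemma dia_fill:
  assumes gl: "glframe R"
  shows "(\<forall>v. (v = w \<or> R w v) \<longrightarrow> \<not> feval R V v A) \<Longrightarrow> sval R V w (fill C (sfm A)) \<Longrightarrow> sval R V w (fill C sempty)"
proof (induction C arbitrary: w)
  case (Hole D)
  then show ?case by auto
next
  case (Nest D C)
  have tr: "\<And>x y z. R x y \<Longrightarrow> R y z \<Longrightarrow> R x z" using gl unfolding glframe_def by blast
  show ?case
  proof (cases "sval R V w D")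
    case True then show ?thesis by simp
  next
    case False
    then have h: "\<forall>u. R w u \<longrightarrow> sval R V u (fill C (sfm A))" using Nest.prems by simp
    have "\<forall>u. R w u \<longrightarrow> sval R V u (fill C sempty)"
    proof (intro allI impI)
      fix u assume u: "R w u"
      have "\<forall>v. (v = u \<or> R u v) \<longrightarrow> \<not> feval R V v A" using Nest.prems(1) u tr by blast
      then show "sval R V u (fill C sempty)" using Nest.IH h u by blast
    qed
    then show ?thesis by simp
  qed
qed

lemma cfprov_sound: "cfprov S \<Longrightarrow> glframe R \<Longrightarrow> sval R V w S"
proof (induction arbitrary: w rule: cfprov.induct)
  case (rid G a)
  show ?case by (rule fill_valid) (auto simp: sval_Seq)
next
  case (rand G A B)
  show ?case by (rule fill_conj[of R V "sfm A" "sfm B"]) (use rand in auto)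
next
  case (ror G A B)
  show ?case by (rule fill_mono[of R V "Seq {#A, B#} {#}"]) (use ror in \<open>auto simp: sval_Seq\<close>)
next
  case (rbox G A)
  show ?case
  proof (rule fill_mono[of R V "sbr (Seq {#Dia (neg A), A#} {#})"])
    fix v assume "sval R V v (sbr (Seq {#Dia (neg A), A#} {#}))"
    then have h: "\<forall>u. R v u \<longrightarrow> (\<exists>y. R u y \<and> \<not> feval R V y A) \<or> feval R V u A"
      by (simp add: sval_Seq)
    show "sval R V v (sfm (Box A))"
    proof (rule ccontr)
      assume "\<not> sval R V v (sfm (Box A))"
      then obtain u where "R v u" "\<not> feval R V u A" by auto
      then obtain z where z: "R v z" "\<not> feval R V z A" "\<forall>y. R z y \<longrightarrow> feval R V y A"
        using loeb_max[OF rbox.prems, of v u "\<lambda>u. feval R V u A"] by blast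
      then show False using h by blast
    qed
  next
    show "sval R V w (fill G (sbr (Seq {#Dia (neg A), A#} {#})))" using rbox by blast
  qed
next
  case (rdia D G A)
  have tr: "\<And>x y z. R x y \<Longrightarrow> R y z \<Longrightarrow> R x z" using rdia.prems unfolding glframe_def by blast
  show ?case
  proof (rule fill_mono[of R V "sjoin (fill D (sfm A)) (sfm (Dia A))"])
    fix v assume a: "sval R V v (sjoin (fill D (sfm A)) (sfm (Dia A)))"
    show "sval R V v (sjoin (fill D sempty) (sfm (Dia A)))"
    proof (cases "feval R V v (Dia A)")
      case True then show ?thesis by simp
    next
      case False
      then have nA: "\<forall>u. R v u \<longrightarrow> \<not> feval R V u A" by simp
      have fd: "sval R V v (fill D (sfm A))" using a nA by auto
      obtain D0 C where D: "D = Nest D0 C" using rdia.hyps(1) by (cases D) auto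
      have "sval R V v (fill D sempty)"
      proof (cases "sval R V v D0")
        case True then show ?thesis using D by simp
      next
        case f2: False
        then have h: "\<forall>u. R v u \<longrightarrow> sval R V u (fill C (sfm A))" using fd D by simp
        have "\<forall>u. R v u \<longrightarrow> sval R V u (fill C sempty)"
        proof (intro allI impI)
          fix u assume u: "R v u"
          have "\<forall>x. (x = u \<or> R u x) \<longrightarrow> \<not> feval R V x A" using nA u tr by blast
          then show "sval R V u (fill C sempty)" using dia_fill[OF rdia.prems] h u by blast
        qed
        then show ?thesis using D by simp
      qed
      then show ?thesis by simp
    qed
  next
    show "sval R V w (fill G (sjoin (fill D (sfm A)) (sfm (Dia A))))" using rdia by blast
  qed
qed


section \<open>Completeness of SP\<close>

lemma neg_neg[simp]: "neg (neg A) = A"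
  by (induction A) auto

lemma size_neg[simp]: "size (neg A) = size A"
  by (induction A) auto

lemma ne_neg[simp]: "B \<noteq> Or (neg B) X" "B \<noteq> Or X (neg B)" "B \<noteq> And (neg B) X" "B \<noteq> And X (neg B)"
  "Or (neg B) X \<noteq> B" "Or X (neg B) \<noteq> B" "And (neg B) X \<noteq> B" "And X (neg B) \<noteq> B"
  by (auto dest: arg_cong[where f=size])

lemma SP_gid: "B \<in> X \<Longrightarrow> neg B \<in> X \<Longrightarrow> SP P X"
proof (induction B arbitrary: P X)
  case (At x)
  then show ?case using sid by simp
next
  case (NAt x)
  then show ?case using sid by simp
next
  case (And B C)
  let ?O = "Or (neg B) (neg C)"
  have o: "?O \<in> X" using And.prems by simp
  have 1: "SP P (insert B (X - {And B C}))"
  proof (rule sor[of "neg B" "neg C"])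
    show "?O \<in> insert B (X - {And B C})" using o by simp
    show "SP P (insert (neg B) (insert (neg C) (insert B (X - {And B C}) - {?O})))"
      by (rule And.IH(1)) auto
  qed
  have 2: "SP P (insert C (X - {And B C}))"
  proof (rule sor[of "neg B" "neg C"])
    show "?O \<in> insert C (X - {And B C})" using o by simp
    show "SP P (insert (neg B) (insert (neg C) (insert C (X - {And B C}) - {?O})))"
      by (rule And.IH(2)) auto
  qed
  show ?case by (rule sand[OF And.prems(1) 1 2])
next
  case (Or B C)
  let ?O = "And (neg B) (neg C)"
  have o: "?O \<in> X" using Or.prems by simp
  have "SP P (insert B (insert C (X - {Or B C})))"
  proof (rule sand[of "neg B" "neg C"])
    show "?O \<in> insert B (insert C (X - {Or B C}))" using o by simp
    show "SP P (insert (neg B) (insert B (insert C (X - {Or B C})) - {?O}))"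
      by (rule Or.IH(1)) auto
    show "SP P (insert (neg C) (insert B (insert C (X - {Or B C})) - {?O}))"
      by (rule Or.IH(2)) auto
  qed
  then show ?case by (rule sor[OF Or.prems(1)])
next
  case (Box B)
  have "SP (P \<union> {D. Dia D \<in> X}) {Dia (neg B), B}"
  proof (rule sinh[of "neg B"])
    show "neg B \<in> P \<union> {D. Dia D \<in> X}" using Box.prems by simp
    show "SP (P \<union> {D. Dia D \<in> X}) (insert (neg B) {Dia (neg B), B})" by (rule Box.IH) auto
  qed
  then show ?case by (rule sbox[OF Box.prems(1)])
next
  case (Dia B)
  have bx: "Box (neg B) \<in> X" using Dia.prems by simp
  have "SP (P \<union> {D. Dia D \<in> X}) {Dia (neg (neg B)), neg B}"
  proof (rule sinh[of B])
    show "B \<in> P \<union> {D. Dia D \<in> X}" using Dia.prems by simp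
    show "SP (P \<union> {D. Dia D \<in> X}) (insert B {Dia (neg (neg B)), neg B})" by (rule Dia.IH) auto
  qed
  then show ?case by (rule sbox[OF bx])
qed

fun sub :: "fm \<Rightarrow> fm set" where
  "sub (At a) = {At a}"
| "sub (NAt a) = {NAt a}"
| "sub (And A B) = insert (And A B) (sub A \<union> sub B)"
| "sub (Or A B) = insert (Or A B) (sub A \<union> sub B)"
| "sub (Box A) = insert (Box A) (sub A)"
| "sub (Dia A) = insert (Dia A) (sub A)"

lemma sub_refl: "A \<in> sub A" by (cases A) auto

lemma finite_sub: "finite (sub A)" by (induction A) auto

lemma sub_trans: "B \<in> sub A \<Longrightarrow> C \<in> sub B \<Longrightarrow> C \<in> sub A"
  by (induction A) auto

definition Cl :: "fm \<Rightarrow> fm set" where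
  "Cl A = sub A \<union> neg ` sub A \<union> (\<lambda>B. Dia (neg B)) ` {B. Box B \<in> sub A}"

lemma finite_Cl: "finite (Cl A)"
proof -
  have "{B. Box B \<in> sub A} \<subseteq> (\<lambda>F. case F of Box B \<Rightarrow> B | _ \<Rightarrow> F) ` sub A" by force
  then have "finite {B. Box B \<in> sub A}" using finite_sub finite_surj by blast
  then show ?thesis unfolding Cl_def using finite_sub by blast
qed

lemma sub_And: "And B C \<in> sub A \<Longrightarrow> B \<in> sub A \<and> C \<in> sub A"
  using sub_trans[of "And B C" A] sub_refl by fastforce
lemma sub_Or: "Or B C \<in> sub A \<Longrightarrow> B \<in> sub A \<and> C \<in> sub A"
  using sub_trans[of "Or B C" A] sub_refl by fastforce
lemma sub_Box: "Box B \<in> sub A \<Longrightarrow> B \<in> sub A"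
  using sub_trans[of "Box B" A] sub_refl by fastforce
lemma sub_Dia: "Dia B \<in> sub A \<Longrightarrow> B \<in> sub A"
  using sub_trans[of "Dia B" A] sub_refl by fastforce

lemma neg_eq_And: "neg D = And B C \<Longrightarrow> D = Or (neg B) (neg C)"
  by (cases D) auto
lemma neg_eq_Or: "neg D = Or B C \<Longrightarrow> D = And (neg B) (neg C)"
  by (cases D) auto
lemma neg_eq_Box: "neg D = Box B \<Longrightarrow> D = Dia (neg B)"
  by (cases D) auto
lemma neg_eq_Dia: "neg D = Dia B \<Longrightarrow> D = Box (neg B)"
  by (cases D) auto

lemma Cl_And: "And B C \<in> Cl A \<Longrightarrow> B \<in> Cl A \<and> C \<in> Cl A"
proof -
  assume "And B C \<in> Cl A"
  then consider "And B C \<in> sub A" | D where "D \<in> sub A" "neg D = And B C" unfolding Cl_def by auto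
  then show ?thesis
  proof cases
    case 1 then show ?thesis using sub_And unfolding Cl_def by blast
  next
    case 2
    then have "Or (neg B) (neg C) \<in> sub A" using neg_eq_And by blast
    then have "neg B \<in> sub A" "neg C \<in> sub A" using sub_Or by blast+
    then have "neg (neg B) \<in> neg ` sub A" "neg (neg C) \<in> neg ` sub A" by blast+
    then show ?thesis unfolding Cl_def by simp
  qed
qed

lemma Cl_Or: "Or B C \<in> Cl A \<Longrightarrow> B \<in> Cl A \<and> C \<in> Cl A"
proof -
  assume "Or B C \<in> Cl A"
  then consider "Or B C \<in> sub A" | D where "D \<in> sub A" "neg D = Or B C" unfolding Cl_def by auto
  then show ?thesis
  proof cases
    case 1 then show ?thesis using sub_Or unfolding Cl_def by blast
  next
    case 2
    then have "And (neg B) (neg C) \<in> sub A" using neg_eq_Or by blast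
    then have "neg B \<in> sub A" "neg C \<in> sub A" using sub_And by blast+
    then have "neg (neg B) \<in> neg ` sub A" "neg (neg C) \<in> neg ` sub A" by blast+
    then show ?thesis unfolding Cl_def by simp
  qed
qed

lemma Cl_Box: "Box B \<in> Cl A \<Longrightarrow> B \<in> Cl A \<and> Dia (neg B) \<in> Cl A"
proof -
  assume "Box B \<in> Cl A"
  then consider "Box B \<in> sub A" | D where "D \<in> sub A" "neg D = Box B" unfolding Cl_def by auto
  then show ?thesis
  proof cases
    case 1 then show ?thesis using sub_Box unfolding Cl_def by blast
  next
    case 2
    then have d: "Dia (neg B) \<in> sub A" using neg_eq_Box by blast
    then have "neg B \<in> sub A" using sub_Dia by blast
    then have "neg (neg B) \<in> neg ` sub A" by blast
    then show ?thesis using d unfolding Cl_def by simp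
  qed
qed

lemma Cl_Dia: "Dia B \<in> Cl A \<Longrightarrow> B \<in> Cl A"
proof -
  assume "Dia B \<in> Cl A"
  then consider "Dia B \<in> sub A" | D where "D \<in> sub A" "neg D = Dia B" | E where "Box E \<in> sub A" "B = neg E"
    unfolding Cl_def by auto
  then show ?thesis
  proof cases
    case 1 then show ?thesis using sub_Dia unfolding Cl_def by blast
  next
    case 2
    then have "Box (neg B) \<in> sub A" using neg_eq_Dia by blast
    then have "neg B \<in> sub A" using sub_Box by blast
    then have "neg (neg B) \<in> neg ` sub A" by blast
    then show ?thesis unfolding Cl_def by simp
  next
    case 3
    then have "E \<in> sub A" using sub_Box by blast
    then show ?thesis using 3 unfolding Cl_def by blast
  qed
qed

definition isAO :: "fm \<Rightarrow> bool" where
  "isAO F = ((\<exists>B C. F = And B C) \<or> (\<exists>B C. F = Or B C))"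

definition satd :: "fm set \<Rightarrow> bool" where
  "satd S = (\<forall>B C. (And B C \<in> S \<longrightarrow> B \<in> S \<or> C \<in> S) \<and> (Or B C \<in> S \<longrightarrow> B \<in> S \<and> C \<in> S))"

definition dias :: "fm set \<Rightarrow> fm set" where "dias X = {B. Dia B \<in> X}"

type_synonym world = "fm set \<times> fm set \<times> fm set"

definition isworld :: "fm \<Rightarrow> world \<Rightarrow> bool" where
  "isworld A w = (case w of (P, X, S) \<Rightarrow> P \<subseteq> Cl A \<and> S \<subseteq> Cl A \<and> X \<subseteq> S \<and> P \<subseteq> S \<and> \<not> SP P X \<and> satd S
     \<and> (\<forall>F\<in>S. \<not> isAO F \<longrightarrow> F \<in> X))"

definition TT :: "world \<Rightarrow> fm set" where
  "TT w = (case w of (P, X, S) \<Rightarrow> P \<union> dias X)"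

definition Rm :: "fm \<Rightarrow> world \<Rightarrow> world \<Rightarrow> bool" where
  "Rm A w v = (isworld A w \<and> isworld A v \<and> TT w \<subseteq> fst v \<and> (\<exists>B. Dia B \<in> fst (snd v) \<and> B \<notin> TT w))"

definition Vm :: "nat \<Rightarrow> world \<Rightarrow> bool" where
  "Vm a w = (NAt a \<in> snd (snd w))"

lemma TT_Cl: "isworld A w \<Longrightarrow> TT w \<subseteq> Cl A"
  unfolding isworld_def TT_def dias_def using Cl_Dia by (auto split: prod.splits)

lemma Rm_TT: "Rm A w v \<Longrightarrow> TT w \<subset> TT v"
  unfolding Rm_def TT_def dias_def by (auto split: prod.splits)

lemma glframe_Rm: "glframe (Rm A)"
  unfolding glframe_def
proof
  show "\<forall>x y z. Rm A x y \<longrightarrow> Rm A y z \<longrightarrow> Rm A x z"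
  proof (intro allI impI)
    fix x y z assume xy: "Rm A x y" and yz: "Rm A y z"
    have 1: "TT x \<subseteq> fst y" using xy Rm_def by blast
    have 2: "fst y \<subseteq> TT y" unfolding TT_def by (auto split: prod.splits)
    have 3: "TT y \<subseteq> fst z" using yz Rm_def by blast
    obtain B where "Dia B \<in> fst (snd z)" "B \<notin> TT y" using yz Rm_def by blast
    moreover have "TT x \<subseteq> TT y" using 1 2 by blast
    ultimately show "Rm A x z" using xy yz 1 2 3 unfolding Rm_def by blast
  qed
next
  have "{(y, x). Rm A x y} \<subseteq> measure (\<lambda>w. card (Cl A - TT w))"
  proof (clarsimp)
    fix x y assume r: "Rm A x y"
    have "TT x \<subset> TT y" using Rm_TT[OF r] .
    moreover have "TT y \<subseteq> Cl A" using r TT_Cl Rm_def by blast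
    ultimately have "Cl A - TT y \<subset> Cl A - TT x" by blast
    then show "card (Cl A - TT y) < card (Cl A - TT x)" using finite_Cl by (meson finite_Diff psubset_card_mono)
  qed
  then show "wf {(y, x). Rm A x y}" using wf_subset wf_measure by blast
qed


definition msz :: "fm set \<Rightarrow> nat" where "msz Y = (\<Sum>F\<in>Y. size F)"

lemma msz_insert_le: "finite Z \<Longrightarrow> msz (insert y Z) \<le> size y + msz Z"
  unfolding msz_def by (simp add: sum.insert_if)

lemma msz_remove: "finite Y \<Longrightarrow> x \<in> Y \<Longrightarrow> msz Y = size x + msz (Y - {x})"
  unfolding msz_def by (simp add: sum.remove)

lemma inh_all: "finite Q \<Longrightarrow> Q \<subseteq> P \<Longrightarrow> SP P (X \<union> Q) \<Longrightarrow> SP P X"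
proof (induction Q rule: finite_induct)
  case empty then show ?case by simp
next
  case (insert q Q)
  have "SP P (insert q (X \<union> Q))" using insert.prems by simp
  then have "SP P (X \<union> Q)" using sinh[of q P "X \<union> Q"] insert.prems by blast
  then show ?case using insert by blast
qed

lemma sat0: "finite Y \<Longrightarrow> Y \<subseteq> Cl A \<Longrightarrow> \<not> SP P Y \<Longrightarrow>
  \<exists>X' S. Y \<subseteq> S \<and> X' \<subseteq> S \<and> S \<subseteq> Cl A \<and> \<not> SP P X' \<and> satd S \<and> (\<forall>F\<in>S. \<not> isAO F \<longrightarrow> F \<in> X')"
proof (induction "msz Y" arbitrary: Y rule: less_induct)
  case less
  show ?case
  proof (cases "\<exists>B C. And B C \<in> Y")
    case True
    then obtain B C where bc: "And B C \<in> Y" by blast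
    have "\<not> SP P (insert B (Y - {And B C})) \<or> \<not> SP P (insert C (Y - {And B C}))"
      using sand[OF bc] less.prems(3) by blast
    then obtain D where D: "D = B \<or> D = C" "\<not> SP P (insert D (Y - {And B C}))" by blast
    let ?Y = "insert D (Y - {And B C})"
    have sz: "size D < size (And B C)" using D by auto
    have "msz ?Y \<le> size D + msz (Y - {And B C})" by (rule msz_insert_le) (use less.prems(1) in simp)
    moreover have "msz Y = size (And B C) + msz (Y - {And B C})" by (rule msz_remove[OF less.prems(1) bc])
    ultimately have lt: "msz ?Y < msz Y" using sz by linarith
    have "B \<in> Cl A \<and> C \<in> Cl A" using less.prems(2) bc by (intro Cl_And) blast
    then have cl: "?Y \<subseteq> Cl A" using less.prems(2) D(1) by blast
    have fY: "finite ?Y" using less.prems(1) by simp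
    have ex: "\<exists>X' S. ?Y \<subseteq> S \<and> X' \<subseteq> S \<and> S \<subseteq> Cl A \<and> \<not> SP P X' \<and> satd S \<and> (\<forall>F\<in>S. \<not> isAO F \<longrightarrow> F \<in> X')"
      by (rule less.hyps[OF lt fY cl D(2)])
    then obtain X' S where h: "?Y \<subseteq> S" "X' \<subseteq> S" "S \<subseteq> Cl A" "\<not> SP P X'" "satd S" "\<forall>F\<in>S. \<not> isAO F \<longrightarrow> F \<in> X'"
      by blast
    let ?S = "insert (And B C) S"
    have 1: "Y \<subseteq> ?S" using h(1) by blast
    have 2: "?S \<subseteq> Cl A" using h(3) bc less.prems(2) by blast
    have 3: "satd ?S" unfolding satd_def
    proof (intro allI conjI impI)
      fix B' C' assume "And B' C' \<in> ?S"
      then show "B' \<in> ?S \<or> C' \<in> ?S"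
      proof
        assume "And B' C' = And B C" then show ?thesis using h(1) D(1) by auto
      next
        assume "And B' C' \<in> S" then show ?thesis using h(5) unfolding satd_def by blast
      qed
    next
      fix B' C' assume "Or B' C' \<in> ?S"
      then have "Or B' C' \<in> S" by simp
      then show "B' \<in> ?S" using h(5) unfolding satd_def by blast
    next
      fix B' C' assume "Or B' C' \<in> ?S"
      then have "Or B' C' \<in> S" by simp
      then show "C' \<in> ?S" using h(5) unfolding satd_def by blast
    qed
    have 4: "\<forall>F\<in>?S. \<not> isAO F \<longrightarrow> F \<in> X'" using h(6) by (auto simp: isAO_def)
    have 5: "X' \<subseteq> ?S" using h(2) by blast
    show ?thesis by (rule exI[of _ X'], rule exI[of _ ?S], intro conjI) (fact 1, fact 5, fact 2, fact h(4), fact 3, fact 4)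
  next
    case noand: False
    show ?thesis
    proof (cases "\<exists>B C. Or B C \<in> Y")
      case True
      then obtain B C where bc: "Or B C \<in> Y" by blast
      let ?Y = "insert B (insert C (Y - {Or B C}))"
      have nsp: "\<not> SP P ?Y" using sor[OF bc] less.prems(3) by blast
      have "msz ?Y \<le> size B + msz (insert C (Y - {Or B C}))" by (rule msz_insert_le) (use less.prems(1) in simp)
      moreover have "msz (insert C (Y - {Or B C})) \<le> size C + msz (Y - {Or B C})" by (rule msz_insert_le) (use less.prems(1) in simp)
      moreover have "msz Y = size (Or B C) + msz (Y - {Or B C})" by (rule msz_remove[OF less.prems(1) bc])
      ultimately have lt: "msz ?Y < msz Y" by simp
      have "B \<in> Cl A \<and> C \<in> Cl A" using less.prems(2) bc by (intro Cl_Or) blast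
      then have cl: "?Y \<subseteq> Cl A" using less.prems(2) by blast
      have fY: "finite ?Y" using less.prems(1) by simp
      have ex: "\<exists>X' S. ?Y \<subseteq> S \<and> X' \<subseteq> S \<and> S \<subseteq> Cl A \<and> \<not> SP P X' \<and> satd S \<and> (\<forall>F\<in>S. \<not> isAO F \<longrightarrow> F \<in> X')"
        by (rule less.hyps[OF lt fY cl nsp])
      then obtain X' S where h: "?Y \<subseteq> S" "X' \<subseteq> S" "S \<subseteq> Cl A" "\<not> SP P X'" "satd S" "\<forall>F\<in>S. \<not> isAO F \<longrightarrow> F \<in> X'"
        by blast
      let ?S = "insert (Or B C) S"
      have 1: "Y \<subseteq> ?S" using h(1) by blast
      have 2: "?S \<subseteq> Cl A" using h(3) bc less.prems(2) by blast
      have 3: "satd ?S" unfolding satd_def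
      proof (intro allI conjI impI)
        fix B' C' assume "And B' C' \<in> ?S"
        then have "And B' C' \<in> S" by simp
        then show "B' \<in> ?S \<or> C' \<in> ?S" using h(5) unfolding satd_def by blast
      next
        fix B' C' assume "Or B' C' \<in> ?S"
        then show "B' \<in> ?S"
        proof
          assume "Or B' C' = Or B C" then show ?thesis using h(1) by auto
        next
          assume "Or B' C' \<in> S" then show ?thesis using h(5) unfolding satd_def by blast
        qed
      next
        fix B' C' assume "Or B' C' \<in> ?S"
        then show "C' \<in> ?S"
        proof
          assume "Or B' C' = Or B C" then show ?thesis using h(1) by auto
        next
          assume "Or B' C' \<in> S" then show ?thesis using h(5) unfolding satd_def by blast
        qed
      qed
      have 4: "\<forall>F\<in>?S. \<not> isAO F \<longrightarrow> F \<in> X'" using h(6) by (auto simp: isAO_def)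
      have 5: "X' \<subseteq> ?S" using h(2) by blast
    show ?thesis by (rule exI[of _ X'], rule exI[of _ ?S], intro conjI) (fact 1, fact 5, fact 2, fact h(4), fact 3, fact 4)
    next
      case False
      have "satd Y" using False noand unfolding satd_def by blast
      moreover have "\<forall>F\<in>Y. \<not> isAO F \<longrightarrow> F \<in> Y" by blast
      ultimately show ?thesis using less.prems(2,3) by blast
    qed
  qed
qed

lemma saturate:
  assumes "\<not> SP P X" "P \<subseteq> Cl A" "X \<subseteq> Cl A" "finite X" "finite P"
  shows "\<exists>X' S. isworld A (P, X', S) \<and> X \<subseteq> S"
proof -
  have n: "\<not> SP P (X \<union> P)" using inh_all[OF assms(5), of P X] assms(1) by blast
  have f: "finite (X \<union> P)" using assms(4,5) by simp
  have c: "X \<union> P \<subseteq> Cl A" using assms(2,3) by simp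
  have "\<exists>X' S. X \<union> P \<subseteq> S \<and> X' \<subseteq> S \<and> S \<subseteq> Cl A \<and> \<not> SP P X' \<and> satd S \<and> (\<forall>F\<in>S. \<not> isAO F \<longrightarrow> F \<in> X')"
    by (rule sat0[OF f c n])
  then obtain X' S where h: "X \<union> P \<subseteq> S" "X' \<subseteq> S" "S \<subseteq> Cl A" "\<not> SP P X'" "satd S" "\<forall>F\<in>S. \<not> isAO F \<longrightarrow> F \<in> X'"
    by blast
  have "isworld A (P, X', S)" unfolding isworld_def using assms(2) h by auto
  moreover have "X \<subseteq> S" using h(1) by blast
  ultimately show ?thesis by blast
qed

lemma truth: "isworld A w \<Longrightarrow> F \<in> snd (snd w) \<Longrightarrow> \<not> feval (Rm A) Vm w F"
proof (induction F arbitrary: w)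
  case (At a)
  obtain P X S where w: "w = (P, X, S)" by (cases w) auto
  have ws: "P \<subseteq> Cl A \<and> S \<subseteq> Cl A \<and> X \<subseteq> S \<and> P \<subseteq> S \<and> \<not> SP P X \<and> satd S \<and> (\<forall>F\<in>S. \<not> isAO F \<longrightarrow> F \<in> X)"
    using At.prems(1) unfolding isworld_def w by simp
  show ?case
  proof
    assume "feval (Rm A) Vm w (At a)"
    then have "NAt a \<in> S" using w by (simp add: Vm_def)
    then have "NAt a \<in> X" "At a \<in> X" using ws At.prems(2) w by (auto simp: isAO_def)
    then show False using ws sid by blast
  qed
next
  case (NAt a)
  then show ?case by (cases w) (simp add: Vm_def)
next
  case (And B C)
  obtain P X S where w: "w = (P, X, S)" by (cases w) auto
  have st: "satd S" using And.prems(1) unfolding isworld_def w by simp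
  have "And B C \<in> S" using And.prems(2) w by simp
  then have "B \<in> S \<or> C \<in> S" using st unfolding satd_def by blast
  then have "\<not> feval (Rm A) Vm w B \<or> \<not> feval (Rm A) Vm w C"
    using And.IH And.prems(1) w by auto
  then show ?case by simp
next
  case (Or B C)
  obtain P X S where w: "w = (P, X, S)" by (cases w) auto
  have st: "satd S" using Or.prems(1) unfolding isworld_def w by simp
  have "Or B C \<in> S" using Or.prems(2) w by simp
  then have "B \<in> S \<and> C \<in> S" using st unfolding satd_def by blast
  then have "\<not> feval (Rm A) Vm w B \<and> \<not> feval (Rm A) Vm w C"
    using Or.IH Or.prems(1) w by auto
  then show ?case by simp
next
  case (Dia B)
  obtain P X S where w: "w = (P, X, S)" by (cases w) auto
  have ws: "P \<subseteq> Cl A \<and> S \<subseteq> Cl A \<and> X \<subseteq> S \<and> P \<subseteq> S \<and> \<not> SP P X \<and> satd S \<and> (\<forall>F\<in>S. \<not> isAO F \<longrightarrow> F \<in> X)"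
    using Dia.prems(1) unfolding isworld_def w by simp
  have dx: "Dia B \<in> X" using ws Dia.prems(2) w by (auto simp: isAO_def)
  have "\<forall>v. Rm A w v \<longrightarrow> \<not> feval (Rm A) Vm v B"
  proof (intro allI impI)
    fix v assume r: "Rm A w v"
    obtain P' X' S' where v: "v = (P', X', S')" by (cases v) auto
    have "B \<in> TT w" using dx w by (simp add: TT_def dias_def)
    then have "B \<in> P'" using r v Rm_def by auto
    moreover have "P' \<subseteq> S'" using r v unfolding Rm_def isworld_def by auto
    moreover have "isworld A v" using r Rm_def by blast
    ultimately show "\<not> feval (Rm A) Vm v B" using Dia.IH v by auto
  qed
  then show ?case by simp
next
  case (Box B)
  obtain P X S where w: "w = (P, X, S)" by (cases w) auto
  have ws: "P \<subseteq> Cl A \<and> S \<subseteq> Cl A \<and> X \<subseteq> S \<and> P \<subseteq> S \<and> \<not> SP P X \<and> satd S \<and> (\<forall>F\<in>S. \<not> isAO F \<longrightarrow> F \<in> X)"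
    using Box.prems(1) unfolding isworld_def w by simp
  have bx: "Box B \<in> X" using ws Box.prems(2) w by (auto simp: isAO_def)
  let ?Q = "P \<union> dias X"
  have nsp: "\<not> SP ?Q {Dia (neg B), B}" using sbox[OF bx, of P] ws unfolding dias_def by blast
  have "X \<subseteq> Cl A" using ws by blast
  then have fX: "finite X" by (rule finite_subset[OF _ finite_Cl])
  have "P \<subseteq> Cl A" using ws by blast
  then have fP: "finite P" by (rule finite_subset[OF _ finite_Cl])
  have fD: "finite (dias X)" using finite_dias[OF fX] unfolding dias_def .
  have fQ: "finite ?Q" using fP fD by (rule finite_UnI)
  have qcl: "?Q \<subseteq> Cl A" using TT_Cl[OF Box.prems(1)] w by (simp add: TT_def)
  have bcl: "Box B \<in> Cl A" using ws bx by blast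
  have xcl: "{Dia (neg B), B} \<subseteq> Cl A" using Cl_Box[OF bcl] by blast
  obtain X' S' where v: "isworld A (?Q, X', S')" "{Dia (neg B), B} \<subseteq> S'"
  proof -
    have f2: "finite {Dia (neg B), B}" by simp
    show ?thesis using saturate[OF nsp qcl xcl f2 fQ] that by blast
  qed
  have v': "?Q \<subseteq> Cl A \<and> S' \<subseteq> Cl A \<and> X' \<subseteq> S' \<and> ?Q \<subseteq> S' \<and> \<not> SP ?Q X' \<and> satd S' \<and> (\<forall>F\<in>S'. \<not> isAO F \<longrightarrow> F \<in> X')"
    using v(1) unfolding isworld_def by simp
  have dX': "Dia (neg B) \<in> X'" using v(2) v' by (auto simp: isAO_def)
  have nq: "neg B \<notin> ?Q"
  proof
    assume "neg B \<in> ?Q"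
    then have "SP ?Q {Dia (neg B), B}" using sinh[of "neg B" ?Q] SP_gid[of B "insert (neg B) {Dia (neg B), B}" ?Q] by blast
    then show False using nsp by blast
  qed
  have r: "Rm A w (?Q, X', S')" unfolding Rm_def using Box.prems(1) v(1) dX' nq w by (auto simp: TT_def)
  have "\<not> feval (Rm A) Vm (?Q, X', S') B" using Box.IH[OF v(1)] v(2) by auto
  then show ?case using r by auto
qed

lemma SP_complete:
  assumes "\<forall>w. feval (Rm A) Vm w A"
  shows "SP {} {A}"
proof (rule ccontr)
  assume n: "\<not> SP {} {A}"
  have "{A} \<subseteq> Cl A" using sub_refl unfolding Cl_def by blast
  then have "\<exists>X' S. isworld A ({}, X', S) \<and> {A} \<subseteq> S" by (intro saturate[OF n]) auto
  then obtain X' S where "isworld A ({}, X', S)" "{A} \<subseteq> S" by blast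
  then have "\<not> feval (Rm A) Vm ({}, X', S) A" using truth by auto
  then show False using assms by blast
qed


section \<open>Embedding SP into the nested calculus\<close>

fun dseq :: "seq \<Rightarrow> fm set" where
  "dseq (Seq F S) = {B. Dia B \<in># F}"

fun avail :: "ctx \<Rightarrow> fm set" where
  "avail (Hole D) = {}"
| "avail (Nest D C) = dseq D \<union> avail C"

fun extend :: "ctx \<Rightarrow> seq \<Rightarrow> ctx" where
  "extend (Hole D) W = Hole (sjoin D W)"
| "extend (Nest D C) W = Nest D (extend C W)"

fun push :: "ctx \<Rightarrow> seq \<Rightarrow> ctx" where
  "push (Hole D) W = Nest (sjoin D W) (Hole sempty)"
| "push (Nest D C) W = Nest D (push C W)"

lemma sjoin_assoc: "sjoin (sjoin X Y) Z = sjoin X (sjoin Y Z)"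
  by (cases X; cases Y; cases Z) (simp add: add.assoc)

lemma sjoin_empty[simp]: "sjoin X sempty = X" "sjoin sempty X = X"
  by (cases X; simp add: sempty_def)+

lemma fill_extend: "fill (extend G W) Z = fill G (sjoin W Z)"
  by (induction G) (simp_all add: sjoin_assoc)

lemma fill_push: "fill (push G W) Z = fill G (sjoin W (sbr Z))"
  by (induction G) (simp_all add: sjoin_assoc)

lemma avail_extend[simp]: "avail (extend G W) = avail G"
  by (induction G) auto

lemma dseq_sjoin: "dseq (sjoin X Y) = dseq X \<union> dseq Y"
  by (cases X; cases Y) auto

lemma avail_push: "avail G \<union> dseq W \<subseteq> avail (push G W)"
  by (induction G) (auto simp: dseq_sjoin)

lemma depth_extend[simp]: "depth (extend D W) = depth D"
  by (induction D) auto

lemma split_avail: "B \<in> avail G \<Longrightarrow> \<exists>G1 D. depth D > 0 \<and> (\<forall>Z. fill G Z = fill G1 (sjoin (fill D Z) (sfm (Dia B))))"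
proof (induction G)
  case (Hole D) then show ?case by simp
next
  case (Nest D0 C)
  show ?case
  proof (cases "B \<in> dseq D0")
    case True
    obtain F S where D0: "D0 = Seq F S" by (cases D0) auto
    have f: "Dia B \<in># F" using True D0 by simp
    then obtain F' where F: "F = add_mset (Dia B) F'" by (metis multi_member_split)
    let ?G1 = "Hole (Seq F' S)" and ?D = "Nest sempty C"
    have "\<forall>Z. fill (Nest D0 C) Z = fill ?G1 (sjoin (fill ?D Z) (sfm (Dia B)))"
      by (simp add: D0 F sbr_def sfm_def sempty_def)
    then show ?thesis by (intro exI[of _ ?G1] exI[of _ ?D]) simp
  next
    case False
    then have "B \<in> avail C" using Nest.prems by simp
    then obtain G1 D where h: "depth D > 0" "\<forall>Z. fill C Z = fill G1 (sjoin (fill D Z) (sfm (Dia B)))"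
      using Nest.IH by blast
    have "\<forall>Z. fill (Nest D0 C) Z = fill (Nest D0 G1) (sjoin (fill D Z) (sfm (Dia B)))"
      using h(2) by simp
    then show ?thesis using h(1) by blast
  qed
qed

lemma embed: "SP P X \<Longrightarrow> X \<subseteq> set_mset M \<Longrightarrow> P \<subseteq> avail G \<Longrightarrow> cfprov (fill G (Seq M {#}))"
proof (induction arbitrary: G M rule: SP.induct)
  case (sid a X P)
  have "NAt a \<in># M" using sid by blast
  then obtain M1 where M1: "M = add_mset (NAt a) M1" by (metis multi_member_split)
  have "At a \<in># M1" using sid M1 by auto
  then obtain M2 where M2: "M1 = add_mset (At a) M2" by (metis multi_member_split)
  have e: "fill G (Seq M {#}) = fill (extend G (Seq M2 {#})) (Seq {#NAt a, At a#} {#})"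
    by (simp add: fill_extend M1 M2)
  show ?case unfolding e by (rule rid)
next
  case (sand A B X P)
  have "And A B \<in># M" using sand by blast
  then obtain M' where M': "M = add_mset (And A B) M'" by (metis multi_member_split)
  let ?G = "extend G (Seq M' {#})"
  have e: "fill G (Seq M {#}) = fill ?G (sfm (And A B))" by (simp add: fill_extend M' sfm_def)
  have 1: "cfprov (fill G (Seq (add_mset A M') {#}))"
    by (rule sand.IH(1)) (use sand.prems M' in auto)
  have 2: "cfprov (fill G (Seq (add_mset B M') {#}))"
    by (rule sand.IH(2)) (use sand.prems M' in auto)
  have h1': "cfprov (fill ?G (sfm A))" using 1 by (simp add: fill_extend sfm_def)
  have h2': "cfprov (fill ?G (sfm B))" using 2 by (simp add: fill_extend sfm_def)
  show ?case unfolding e by (rule rand[OF h1' h2'])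
next
  case (sor A B X P)
  have "Or A B \<in># M" using sor by blast
  then obtain M' where M': "M = add_mset (Or A B) M'" by (metis multi_member_split)
  let ?G = "extend G (Seq M' {#})"
  have e: "fill G (Seq M {#}) = fill ?G (sfm (Or A B))" by (simp add: fill_extend M' sfm_def)
  have 1: "cfprov (fill G (Seq (add_mset A (add_mset B M')) {#}))"
    by (rule sor.IH) (use sor.prems M' in auto)
  have h1': "cfprov (fill ?G (Seq {#A, B#} {#}))" using 1 by (simp add: fill_extend)
  show ?case unfolding e by (rule ror[OF h1'])
next
  case (sbox A X P)
  have "Box A \<in># M" using sbox by blast
  then obtain M' where M': "M = add_mset (Box A) M'" by (metis multi_member_split)
  let ?W = "Seq M' {#}"
  let ?G = "extend G ?W"
  have e: "fill G (Seq M {#}) = fill ?G (sfm (Box A))" by (simp add: fill_extend M' sfm_def)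
  have av: "P \<union> {B. Dia B \<in> X} \<subseteq> avail (push G ?W)"
  proof -
    have "{B. Dia B \<in> X} \<subseteq> dseq ?W" using sbox.prems(1) M' by auto
    then show ?thesis using sbox.prems(2) avail_push[of G ?W] by blast
  qed
  have 1: "cfprov (fill (push G ?W) (Seq {#Dia (neg A), A#} {#}))"
    by (rule sbox.IH) (use av in auto)
  have h1': "cfprov (fill ?G (sbr (Seq {#Dia (neg A), A#} {#})))" using 1 by (simp add: fill_extend fill_push)
  show ?case unfolding e by (rule rbox[OF h1'])
next
  case (sinh B P X)
  have "B \<in> avail G" using sinh by blast
  then obtain G1 D where h: "depth D > 0" "\<forall>Z. fill G Z = fill G1 (sjoin (fill D Z) (sfm (Dia B)))"
    using split_avail by blast
  let ?D = "extend D (Seq M {#})"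
  have e: "fill G (Seq M {#}) = fill G1 (sjoin (fill ?D sempty) (sfm (Dia B)))"
    using h(2) by (simp add: fill_extend)
  have 1: "cfprov (fill G (Seq (add_mset B M) {#}))"
    by (rule sinh.IH) (use sinh.prems in auto)
  have "fill G (Seq (add_mset B M) {#}) = fill G1 (sjoin (fill ?D (sfm B)) (sfm (Dia B)))"
    using h(2) by (simp add: fill_extend sfm_def)
  then have h1': "cfprov (fill G1 (sjoin (fill ?D (sfm B)) (sfm (Dia B))))" using 1 by simp
  have d: "depth ?D > 0" using h(1) by simp
  show ?case unfolding e by (rule rdia[OF d h1'])
qed

lemma SP_of_GL: "GL (tr A) \<Longrightarrow> SP {} {A}"
proof -
  assume g: "GL (tr A)"
  have "\<forall>w. feval (Rm A) Vm w A"
  proof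
    fix w show "feval (Rm A) Vm w A" using GL_sound[OF g glframe_Rm, where V=Vm and w=w] by (simp add: meval_tr)
  qed
  then show ?thesis by (rule SP_complete)
qed

lemma SP_of_cfprov: "cfprov (sfm A) \<Longrightarrow> SP {} {A}"
proof -
  assume c: "cfprov (sfm A)"
  have "\<forall>w. feval (Rm A) Vm w A"
  proof
    fix w show "feval (Rm A) Vm w A" using cfprov_sound[OF c glframe_Rm, where V=Vm and w=w] by simp
  qed
  then show ?thesis by (rule SP_complete)
qed

theorem mainTheorem1:
  shows "GL (tr A) \<longleftrightarrow> cfprov (sfm A)"
proof
  assume "GL (tr A)"
  then have sp: "SP {} {A}" by (rule SP_of_GL)
  have "cfprov (fill (Hole sempty) (Seq {#A#} {#}))" by (rule embed[OF sp]) auto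
  then show "cfprov (sfm A)" by (simp add: sfm_def)
next
  assume "cfprov (sfm A)"
  then have sp: "SP {} {A}" by (rule SP_of_cfprov)
  have g: "GL (iota {} {A})" using SP_sound[OF sp] by simp
  show "GL (tr A)"
    by (rule GL_tautN[of "[iota {} {A}]"]) (use g in \<open>auto simp: peval_iota\<close>)
qed



end
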